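(* For $c\in\mathbb{R}$ and $c_1\in\mathbb{R}\setminus\{0,-1\}$ consider the Type $\mathcal{A}$ models $\mathcal{M}_1^1=\mathcal{M}(-1,0,1,0,0,2)$, $\mathcal{M}_2^1(c_1)=\mathcal{M}(-1,0,c_1,0,0,1+2c_1)$, $\mathcal{M}_3^1(c_1)=\mathcal{M}(0,0,c_1,0,0,1+2c_1)$, $\mathcal{M}_4^1(c)=\mathcal{M}(0,0,1,0,c,2)$, $\mathcal{M}_5^1(c)=\mathcal{M}(1,0,0,0,1+c^2,2c)$. Their isotropy groups are: (1) $\mathcal{I}(\mathcal{M}_1^1)=\{\mathrm{id}\}$. (2) $\mathcal{I}(\mathcal{M}_2^1(c_1))=\{\mathrm{id}\}$ if $c_1\neq-\frac12$. (3) $\mathcal{I}(\mathcal{M}_2^1(-\frac12))=\{\mathrm{id},T\}$ where $T(x^1,x^2)=(x^1+x^2,-x^2)$. (4) $\mathcal{I}(\mathcal{M}_3^1(c_1))=\{T: T(x^1,x^2)=(v^{-1}x^1,x^2),\ v\in\mathbb{R}\setminus\{0\}\}$. (5) $\mathcal{I}(\mathcal{M}_4^1(c))=\{T:T(x^1,x^2)=(x^1-wx^2,x^2),\ w\in\mathbb{R}\}$ if $c\neq0$. (6) $\mathcal{I}(\mathcal{M}_4^1(0))=\{T:T(x^1,x^2)=(v^{-1}(x^1-wx^2),x^2),\ w\in\mathbb{R},\ v\in\mathbb{R}\setminus\{0\}\}$. (7) $\mathcal{I}(\mathcal{M}_5^1(c))=\{\mathrm{id}\}$ if $c\neq0$.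 (8) $\mathcal{I}(\mathcal{M}_5^1(0))=\{\mathrm{id},T\}$ where $T(x^1,x^2)=(x^1,-x^2)$.
   Context: For $(a,b,c,d,e,f)\in\mathbb{R}^6$, the Type $\mathcal{A}$ model $\mathcal{M}(a,b,c,d,e,f)$ is $(\mathbb{R}^2,\nabla)$ with torsion free connection with constant Christoffel symbols ($\nabla_{\partial_{x^i}}\partial_{x^j}=\Gamma_{ij}{}^k\partial_{x^k}$) $\Gamma_{11}{}^1=a$, $\Gamma_{11}{}^2=b$, $\Gamma_{12}{}^1=\Gamma_{21}{}^1=c$, $\Gamma_{12}{}^2=\Gamma_{21}{}^2=d$, $\Gamma_{22}{}^1=e$, $\Gamma_{22}{}^2=f$. The group $\operatorname{GL}(2,\mathbb{R})$ acts on Type $\mathcal{A}$ models by linear changes of coordinates $T$ (pulling back the connection, which again has constant Christoffel symbols). The isotropy group of a model $\mathcal{M}$ is $\mathcal{I}(\mathcal{M})=\{T\in\operatorname{GL}(2,\mathbb{R}): T^*\mathcal{M}=\mathcal{M}\}$. *)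

theory Defs
  imports "HOL-Analysis.Analysis"
begin

text \<open>Christoffel symbols of a Type A model: Gamma i j k = Gamma_{ij}^k, indices in type 2
  (index 1 = x^1, index 2 = x^2).\<close>
type_synonym christoffel = "2 \<Rightarrow> 2 \<Rightarrow> 2 \<Rightarrow> real"

definition typeA :: "real \<Rightarrow> real \<Rightarrow> real \<Rightarrow> real \<Rightarrow> real \<Rightarrow> real \<Rightarrow> christoffel" where
  "typeA a b c d e f = (\<lambda>i j k.
     if i = 1 \<and> j = 1 then (if k = 1 then a else b)
     else if i = 2 \<and> j = 2 then (if k = 1 then e else f)
     else (if k = 1 then c else d))"

text \<open>2x2 matrix with rows (p,q), (r,s); acts on column vectors: T(x) = T *v x.\<close>
definition mat2 :: "real \<Rightarrow> real \<Rightarrow> real \<Rightarrow> real \<Rightarrow> real^2^2" where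
  "mat2 p q r s = (\<chi> i j. if i = 1 then (if j = 1 then p else q) else (if j = 1 then r else s))"

text \<open>Pullback of a connection with constant Christoffel symbols under the linear
  change of coordinates y = T x:  Gamma'_{ij}^k = sum (T^{-1})^k_c Gamma_{ab}^c T^a_i T^b_j.\<close>
definition pullback :: "real^2^2 \<Rightarrow> christoffel \<Rightarrow> christoffel" where
  "pullback T G = (\<lambda>i j k. \<Sum>a\<in>UNIV. \<Sum>b\<in>UNIV. \<Sum>c\<in>UNIV.
      (matrix_inv T) $ k $ c * G a b c * T $ a $ i * T $ b $ j)"

definition isotropy :: "christoffel \<Rightarrow> (real^2^2) set" where
  "isotropy G = {T. invertible T \<and> pullback T G = G}"

end

theory Submission
  imports Defs
begin


lemma minv: assumes "invertible (T::real^2^2)"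
  shows "T ** matrix_inv T = mat 1" "matrix_inv T ** T = mat 1"
proof -
  have "T ** matrix_inv T = mat 1 \<and> matrix_inv T ** T = mat 1"
    using assms unfolding invertible_def matrix_inv_def by (rule someI_ex)
  then show "T ** matrix_inv T = mat 1" "matrix_inv T ** T = mat 1" by auto
qed

lemma pull_eq: "pullback T G i j k = (\<Sum>c\<in>UNIV. matrix_inv T $ k $ c *
   (\<Sum>a\<in>UNIV. \<Sum>b\<in>UNIV. G a b c * T $ a $ i * T $ b $ j))"
  unfolding pullback_def by (simp add: sum_2 algebra_simps)

lemma pull_char:
  assumes "invertible (T::real^2^2)"
  shows "pullback T G = G \<longleftrightarrow>
    (\<forall>i j m. (\<Sum>a\<in>UNIV. \<Sum>b\<in>UNIV. G a b m * T $ a $ i * T $ b $ j) = (\<Sum>k\<in>UNIV. T $ m $ k * G i j k))"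
proof -
  define X where "X i j = (\<chi> c. \<Sum>a\<in>UNIV. \<Sum>b\<in>UNIV. G a b c * T $ a $ i * T $ b $ j)" for i j
  define g where "g i j = (\<chi> k. G i j k)" for i j
  have "pullback T G = G \<longleftrightarrow> (\<forall>i j. matrix_inv T *v X i j = g i j)"
    by (simp add: fun_eq_iff vec_eq_iff pull_eq matrix_vector_mult_def X_def g_def)
  also have "\<dots> \<longleftrightarrow> (\<forall>i j. X i j = T *v g i j)"
    by (metis minv[OF assms] matrix_vector_mul_assoc matrix_vector_mul_lid)
  also have "\<dots> \<longleftrightarrow> (\<forall>i j m. (\<Sum>a\<in>UNIV. \<Sum>b\<in>UNIV. G a b m * T $ a $ i * T $ b $ j) = (\<Sum>k\<in>UNIV. T $ m $ k * G i j k))"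
    by (simp add: vec_eq_iff matrix_vector_mult_def X_def g_def)
  finally show ?thesis .
qed

lemma mat2_eta: "(T::real^2^2) = mat2 (T$1$1) (T$1$2) (T$2$1) (T$2$2)"
  unfolding mat2_def by (simp add: vec_eq_iff forall_2)

lemma mat2_nth[simp]: "mat2 p q r s $ 1 $ 1 = p" "mat2 p q r s $ 1 $ 2 = q"
  "mat2 p q r s $ 2 $ 1 = r" "mat2 p q r s $ 2 $ 2 = s"
  unfolding mat2_def by simp_all

lemma mat2_eq[simp]: "mat2 p q r s = mat2 p' q' r' s' \<longleftrightarrow> p = p' \<and> q = q' \<and> r = r' \<and> s = s'"
  unfolding mat2_def by (auto simp: vec_eq_iff forall_2)

lemma mat1: "(mat 1 :: real^2^2) = mat2 1 0 0 1"
  unfolding mat2_def by (simp add: vec_eq_iff forall_2 mat_def)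

lemma typeA_nth[simp]:
  "typeA a b c d e f 1 1 1 = a" "typeA a b c d e f 1 1 2 = b"
  "typeA a b c d e f 1 2 1 = c" "typeA a b c d e f 1 2 2 = d"
  "typeA a b c d e f 2 1 1 = c" "typeA a b c d e f 2 1 2 = d"
  "typeA a b c d e f 2 2 1 = e" "typeA a b c d e f 2 2 2 = f"
  unfolding typeA_def by simp_all

lemma iso_char: "mat2 p q r s \<in> isotropy (typeA a b c d e f) \<longleftrightarrow>
   p* s - q*r \<noteq> 0 \<and>
   a*p^2 + 2*c*p*r + e*r^2 = a*p + b*q \<and>
   b*p^2 + 2*d*p*r + f*r^2 = a*r + b* s \<and>
   a*p*q + c*(p* s + r*q) + e*r* s = c*p + d*q \<and>
   b*p*q + d*(p* s + r*q) + f*r* s = c*r + d* s \<and>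
   a*q^2 + 2*c*q* s + e* s^2 = e*p + f*q \<and>
   b*q^2 + 2*d*q* s + f* s^2 = e*r + f* s"
proof -
  have inv: "invertible (mat2 p q r s) \<longleftrightarrow> p* s - q*r \<noteq> 0"
    by (simp add: invertible_det_nz det_2)
  show ?thesis
  proof (cases "p* s - q*r = 0")
    case True then show ?thesis unfolding isotropy_def using inv by simp
  next
    case False
    then show ?thesis unfolding isotropy_def using inv
      by (simp add: pull_char forall_2 sum_2 power2_eq_square) (auto simp: algebra_simps)
  qed
qed

lemma iso_ex: "T \<in> isotropy G \<longleftrightarrow> (\<exists>p q r s. T = mat2 p q r s \<and> mat2 p q r s \<in> isotropy G)"
  by (metis mat2_eta)


lemma prod0: "(x::real) * y = 0 \<longleftrightarrow> x = 0 \<or> y = 0" by simp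

lemma p1: "mat2 p q r s \<in> isotropy (typeA (-1) 0 1 0 0 2) \<longleftrightarrow> p=1 \<and> q=0 \<and> r=0 \<and> s=1"
proof
  assume "mat2 p q r s \<in> isotropy (typeA (-1) 0 1 0 0 2)"
  then have D: "p* s - q*r \<noteq> 0" and e1: "-(p^2) + 2*p*r = -p" and e2: "2*r^2 = -r"
    and e3: "-p*q + (p* s+r*q) = p" and e4: "2*r* s = r" and e5: "2* s^2 = 2* s"
    unfolding iso_char by auto
  have r: "r = 0"
  proof (rule ccontr)
    assume "r \<noteq> 0"
    have "r*(2*r+1) = 0" "r*(2* s-1) = 0" using e2 e4 by (simp_all add: power2_eq_square algebra_simps)
    then have "2*r = -1" "2* s = 1" using \<open>r \<noteq> 0\<close> by simp_all
    then have "s = 1/2" by simp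
    then show False using e5 by (simp add: power2_eq_square)
  qed
  have s: "s = 1" using e5 D r by (simp add: power2_eq_square)
  have p: "p = 1" using e1 D r by (simp add: power2_eq_square)
  show "p=1 \<and> q=0 \<and> r=0 \<and> s=1" using e3 p r s by simp
qed (simp add: iso_char)

lemma p2: assumes "c1 \<noteq> 0" "c1 \<noteq> -1" "c1 \<noteq> -1/2"
  shows "mat2 p q r s \<in> isotropy (typeA (-1) 0 c1 0 0 (1+2*c1)) \<longleftrightarrow> p=1 \<and> q=0 \<and> r=0 \<and> s=1"
proof
  assume "mat2 p q r s \<in> isotropy (typeA (-1) 0 c1 0 0 (1+2*c1))"
  then have D: "p* s - q*r \<noteq> 0" and e1: "-(p^2) + 2*c1*p*r = -p" and e2: "(1+2*c1)*r^2 = -r"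
    and e3: "-p*q + c1*(p* s+r*q) = c1*p" and e4: "(1+2*c1)*r* s = c1*r" and e5: "(1+2*c1)* s^2 = (1+2*c1)* s"
    unfolding iso_char by auto
  have c: "1+2*c1 \<noteq> 0" using assms by simp
  have s01: "s = 0 \<or> s = 1" using e5 c by (simp add: power2_eq_square)
  have r: "r = 0"
  proof (rule ccontr)
    assume "r \<noteq> 0"
    have "r*((1+2*c1)*r+1) = 0" "r*((1+2*c1)* s-c1) = 0" using e2 e4 by (simp_all add: power2_eq_square algebra_simps)
    then have "(1+2*c1)*r = -1" "(1+2*c1)* s = c1" using \<open>r \<noteq> 0\<close> by simp_all
    then show False using s01 assms by auto
  qed
  have s: "s = 1" using s01 D r by auto
  have p: "p = 1" using e1 D r by (simp add: power2_eq_square)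
  show "p=1 \<and> q=0 \<and> r=0 \<and> s=1" using e3 p r s by simp
qed (simp add: iso_char algebra_simps)

lemma p3: "mat2 p q r s \<in> isotropy (typeA (-1) 0 (-1/2) 0 0 (1 + 2*(-1/2))) \<longleftrightarrow> (p=1 \<and> q=0 \<and> r=0 \<and> s=1) \<or> (p=1 \<and> q=1 \<and> r=0 \<and> s=-1)"
proof
  assume "mat2 p q r s \<in> isotropy (typeA (-1) 0 (-1/2) 0 0 (1 + 2*(-1/2)))"
  then have D: "p* s - q*r \<noteq> 0" and e1: "-(p^2) - p*r = -p" and e2: "r = 0"
    and e3: "-p*q - (p* s+r*q)/2 = -p/2" and e5: "-(q^2) - q * s = 0"
    unfolding iso_char by (auto simp: algebra_simps)
  have p: "p = 1" using e1 D e2 by (simp add: power2_eq_square)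
  have s: "s = 1 - 2*q" using e3 p e2 by simp
  have "q*(q+s) = 0" using e5 by (simp add: power2_eq_square algebra_simps)
  then have "q = 0 \<or> q + s = 0" by simp
  then show "(p=1 \<and> q=0 \<and> r=0 \<and> s=1) \<or> (p=1 \<and> q=1 \<and> r=0 \<and> s=-1)"
    using p s e2 by auto
qed (auto simp add: iso_char)

lemma p4: assumes "c1 \<noteq> 0" "c1 \<noteq> -1"
  shows "mat2 p q r s \<in> isotropy (typeA 0 0 c1 0 0 (1+2*c1)) \<longleftrightarrow> p \<noteq> 0 \<and> q=0 \<and> r=0 \<and> s=1"
proof
  assume "mat2 p q r s \<in> isotropy (typeA 0 0 c1 0 0 (1+2*c1))"
  then have D: "p* s - q*r \<noteq> 0" and e1: "2*c1*p*r = 0"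
    and e3: "c1*(p* s+r*q) = c1*p" and e6: "2*c1*q* s = (1+2*c1)*q"
    unfolding iso_char by auto
  have pr: "p*r = 0" using e1 assms by simp
  have r: "r = 0"
  proof (rule ccontr)
    assume "r \<noteq> 0"
    then have "p = 0" using pr by simp
    then have "q*r \<noteq> 0" using D by simp
    then show False using e3 \<open>p = 0\<close> assms by simp
  qed
  have s: "s = 1" using e3 D r assms by simp
  have "q = 0" using e6 s by (simp add: algebra_simps)
  then show "p \<noteq> 0 \<and> q=0 \<and> r=0 \<and> s=1" using D r s by simp
qed (auto simp add: iso_char)

lemma p5: assumes "c \<noteq> 0"
  shows "mat2 p q r s \<in> isotropy (typeA 0 0 1 0 c 2) \<longleftrightarrow> p = 1 \<and> r=0 \<and> s=1"
proof
  assume "mat2 p q r s \<in> isotropy (typeA 0 0 1 0 c 2)"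
  then have D: "p* s - q*r \<noteq> 0" and e2: "2*r^2 = 0"
    and e3: "p* s+r*q = p" and e5: "2*q* s + c* s^2 = c*p + 2*q"
    unfolding iso_char by auto
  have r: "r = 0" using e2 by simp
  have s: "s = 1" using e3 D r by simp
  have "p = 1" using e5 s assms by simp
  then show "p = 1 \<and> r=0 \<and> s=1" using r s by simp
qed (auto simp add: iso_char)

lemma p6: "mat2 p q r s \<in> isotropy (typeA 0 0 1 0 0 2) \<longleftrightarrow> p \<noteq> 0 \<and> r=0 \<and> s=1"
proof
  assume "mat2 p q r s \<in> isotropy (typeA 0 0 1 0 0 2)"
  then have D: "p* s - q*r \<noteq> 0" and e2: "2*r^2 = 0"
    and e3: "p* s+r*q = p"
    unfolding iso_char by auto
  have r: "r = 0" using e2 by simp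
  have s: "s = 1" using e3 D r by simp
  then show "p \<noteq> 0 \<and> r=0 \<and> s=1" using r s D by simp
qed (auto simp add: iso_char)

lemma p7: assumes "c \<noteq> 0"
  shows "mat2 p q r s \<in> isotropy (typeA 1 0 0 0 (1 + c^2) (2*c)) \<longleftrightarrow> p=1 \<and> q=0 \<and> r=0 \<and> s=1"
proof
  assume "mat2 p q r s \<in> isotropy (typeA 1 0 0 0 (1 + c^2) (2*c))"
  then have D: "p* s - q*r \<noteq> 0" and e1: "p^2 + (1+c^2)*r^2 = p"
    and e3: "p*q + (1+c^2)*r* s = 0" and e4: "2*c*r* s = 0"
    and e6: "2*c* s^2 = (1+c^2)*r + 2*c* s"
    unfolding iso_char by auto
  have c2: "1 + c^2 \<noteq> 0" by (smt (verit) zero_le_power2)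
  have rs: "r* s = 0" using e4 assms by simp
  have r: "r = 0"
  proof (rule ccontr)
    assume "r \<noteq> 0"
    then have "s = 0" using rs by simp
    then show False using e6 c2 \<open>r \<noteq> 0\<close> by simp
  qed
  have p: "p = 1" using e1 D r by (simp add: power2_eq_square)
  have q: "q = 0" using e3 p r by simp
  have "s = 1" using e6 r D assms by (simp add: power2_eq_square)
  then show "p=1 \<and> q=0 \<and> r=0 \<and> s=1" using p q r by simp
qed (simp add: iso_char algebra_simps)

lemma p8: "mat2 p q r s \<in> isotropy (typeA 1 0 0 0 (1 + 0^2) (2*0)) \<longleftrightarrow> (p=1 \<and> q=0 \<and> r=0 \<and> s=1) \<or> (p=1 \<and> q=0 \<and> r=0 \<and> s=-1)"
proof
  assume "mat2 p q r s \<in> isotropy (typeA 1 0 0 0 (1 + 0^2) (2*0))"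
  then have D: "p* s - q*r \<noteq> 0" and e1: "p^2 + r^2 = p" and e2: "r = 0"
    and e3: "p*q + r* s = 0" and e5: "q^2 + s^2 = p"
    unfolding iso_char by auto
  have p: "p = 1" using e1 D e2 by (simp add: power2_eq_square)
  have q: "q = 0" using e3 p e2 by simp
  have "s^2 = 1" using e5 p q by simp
  then have "s = 1 \<or> s = -1" using power2_eq_1_iff by blast
  then show "(p=1 \<and> q=0 \<and> r=0 \<and> s=1) \<or> (p=1 \<and> q=0 \<and> r=0 \<and> s=-1)"
    using p q e2 by auto
qed (auto simp add: iso_char)

theorem lemma4p2:
  fixes c c1 :: real
  assumes "c1 \<noteq> 0" and "c1 \<noteq> -1"
  shows "isotropy (typeA (-1) 0 1 0 0 2) = {mat 1}
   \<and> (c1 \<noteq> -1/2 \<longrightarrow> isotropy (typeA (-1) 0 c1 0 0 (1 + 2*c1)) = {mat 1})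
   \<and> isotropy (typeA (-1) 0 (-1/2) 0 0 (1 + 2*(-1/2))) = {mat 1, mat2 1 1 0 (-1)}
   \<and> isotropy (typeA 0 0 c1 0 0 (1 + 2*c1)) = {mat2 (inverse v) 0 0 1 | v. v \<noteq> 0}
   \<and> (c \<noteq> 0 \<longrightarrow> isotropy (typeA 0 0 1 0 c 2) = {mat2 1 (-w) 0 1 | w. True})
   \<and> isotropy (typeA 0 0 1 0 0 2) = {mat2 (inverse v) (- inverse v * w) 0 1 | v w. v \<noteq> 0}
   \<and> (c \<noteq> 0 \<longrightarrow> isotropy (typeA 1 0 0 0 (1 + c^2) (2*c)) = {mat 1})
   \<and> isotropy (typeA 1 0 0 0 (1 + 0^2) (2*0)) = {mat 1, mat2 1 0 0 (-1)}"
proof (intro conjI impI)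
  show "isotropy (typeA (-1) 0 1 0 0 2) = {mat 1}"
    by (rule set_eqI, subst iso_ex) (auto simp: p1 mat1)
  show "isotropy (typeA (-1) 0 c1 0 0 (1 + 2*c1)) = {mat 1}" if "c1 \<noteq> -1/2"
    using that assms by (intro set_eqI, subst iso_ex) (auto simp: p2 mat1)
  show "isotropy (typeA (-1) 0 (-1/2) 0 0 (1 + 2*(-1/2))) = {mat 1, mat2 1 1 0 (-1)}"
    apply (rule set_eqI, subst iso_ex)
    apply (simp only: p3)
    by (auto simp: mat1)
  show "isotropy (typeA 0 0 c1 0 0 (1 + 2*c1)) = {mat2 (inverse v) 0 0 1 | v. v \<noteq> 0}"
    apply (rule set_eqI, subst iso_ex)
    apply (simp only: p4[OF assms])
    by (auto, metis inverse_inverse_eq inverse_zero)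
  show "isotropy (typeA 0 0 1 0 c 2) = {mat2 1 (-w) 0 1 | w. True}" if "c \<noteq> 0"
    apply (rule set_eqI, subst iso_ex)
    apply (simp only: p5[OF that])
    by (auto, metis minus_minus)
  show "isotropy (typeA 0 0 1 0 0 2) = {mat2 (inverse v) (- inverse v * w) 0 1 | v w. v \<noteq> 0}"
  proof (rule set_eqI)
    fix T :: "real^2^2"
    show "T \<in> isotropy (typeA 0 0 1 0 0 2) \<longleftrightarrow> T \<in> {mat2 (inverse v) (- inverse v * w) 0 1 | v w. v \<noteq> 0}"
    proof
      assume "T \<in> isotropy (typeA 0 0 1 0 0 2)"
      then obtain p q r s where T: "T = mat2 p q r s" and "p \<noteq> 0" "r = 0" "s = 1"
        using iso_ex p6 by metis
      then have "T = mat2 (inverse (inverse p)) (- inverse (inverse p) * (- q / p)) 0 1"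
        by simp
      then show "T \<in> {mat2 (inverse v) (- inverse v * w) 0 1 | v w. v \<noteq> 0}"
        using \<open>p \<noteq> 0\<close> by (metis (mono_tags, lifting) inverse_nonzero_iff_nonzero mem_Collect_eq)
    next
      assume "T \<in> {mat2 (inverse v) (- inverse v * w) 0 1 | v w. v \<noteq> 0}"
      then show "T \<in> isotropy (typeA 0 0 1 0 0 2)" by (auto simp: p6)
    qed
  qed
  show "isotropy (typeA 1 0 0 0 (1 + c^2) (2*c)) = {mat 1}" if "c \<noteq> 0"
    using that by (intro set_eqI, subst iso_ex) (auto simp: p7 mat1)
  show "isotropy (typeA 1 0 0 0 (1 + 0^2) (2*0)) = {mat 1, mat2 1 0 0 (-1)}"
    apply (rule set_eqI, subst iso_ex)
    apply (simp only: p8)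
    by (auto simp: mat1)
qed

end
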